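(* Let $(L,\le,(\sqsubseteq_\alpha)_{\alpha<\kappa})$ be a model of Axioms 1–4 with $\kappa$ a limit ordinal. Let $x\in L$, $\alpha<\kappa$, and let $y=x|_\alpha=\bigsqcup_\alpha\{x\}$. Then $y\in[x]_\alpha$. Moreover, $y$ is the $\le$-least element of $[x]_\alpha$, and $y\sqsubseteq_{\alpha+1}z$ for every $z\in[x]_\alpha$.
   Context: Setting (model of Axioms 1–4). Let $(L,\le)$ be a complete lattice with join operation $\bigvee$ and least element $\perp$. Let $\kappa>0$ be an ordinal, and for each ordinal $\alpha<\kappa$ let $\sqsubseteq_\alpha$ be a preorder on $L$. Derived relations: - $x=_\alpha y$ means $x\sqsubseteq_\alpha y$ and $y\sqsubseteq_\alpha x$. - $x\sqsubset_\alpha y$ means $x\sqsubseteq_\alpha y$ and not $x=_\alpha y$. Derived sets, for $x\in L$ and $\alpha<\kappa$: - $(x]_\alpha=\{y\in L:\forall\beta<\alpha,\ x=_\beta y\}$. - $[x]_\alpha=\{y\in L: x=_\alpha y\}$. For a set $X$, $X\sqsubseteq_\alpha y$ means $x\sqsubseteq_\alpha y$ for all $x\in X$. The structure is a model of Axioms 1–4 if: - (A1) for all $\alpha<\beta<\kappa$, $x\sqsubseteq_\beta y$ implies $x=_\alpha y$; - (A2) $\bigcap_{\alpha<\kappa}=_\alpha$ is the identity relation on $L$; - (A3) for every $x\in L$, every $\alpha<\kappa$ and every $X\subseteq(x]_\alpha$ there is $y\in(x]_\alpha$ with $X\sqsubseteq_\alpha y$ such that for all $z\in(x]_\alpha$ with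 $X\sqsubseteq_\alpha z$ we have $y\sqsubseteq_\alpha z$ and $y\le z$; - (A4) for every nonempty $X\subseteq L$, every $\alpha<\kappa$ and every $y\in L$, if $y=_\alpha x$ for all $x\in X$ then $y=_\alpha\bigvee X$. The element $y$ of (A3) is unique and is denoted $\bigsqcup_\alpha X$. The slice of $x$ at $\alpha$ is $x|_\alpha:=\bigsqcup_\alpha\{x\}$, where $\{x\}\subseteq(x]_\alpha$. *)

theory Defs
  imports Main
begin

text \<open>Ordinals below kappa are modelled by a well-ordered index type 'i
  (every well-order is isomorphic to an ordinal kappa = the set of ordinals below it).
  The family of preorders is P :: 'i => 'a => 'a => bool, P \<alpha> x y meaning x below_alpha y.\<close>

definition eqa :: "('i \<Rightarrow> 'a \<Rightarrow> 'a \<Rightarrow> bool) \<Rightarrow> 'i \<Rightarrow> 'a \<Rightarrow> 'a \<Rightarrow> bool" where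
  "eqa P \<alpha> x y \<longleftrightarrow> P \<alpha> x y \<and> P \<alpha> y x"

definition sqlt :: "('i \<Rightarrow> 'a \<Rightarrow> 'a \<Rightarrow> bool) \<Rightarrow> 'i \<Rightarrow> 'a \<Rightarrow> 'a \<Rightarrow> bool" where
  "sqlt P \<alpha> x y \<longleftrightarrow> P \<alpha> x y \<and> \<not> eqa P \<alpha> x y"

definition lcone :: "('i::order \<Rightarrow> 'a \<Rightarrow> 'a \<Rightarrow> bool) \<Rightarrow> 'a \<Rightarrow> 'i \<Rightarrow> 'a set" where
  "lcone P x \<alpha> = {y. \<forall>\<beta><\<alpha>. eqa P \<beta> x y}"

definition cls :: "('i \<Rightarrow> 'a \<Rightarrow> 'a \<Rightarrow> bool) \<Rightarrow> 'a \<Rightarrow> 'i \<Rightarrow> 'a set" where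
  "cls P x \<alpha> = {y. eqa P \<alpha> x y}"

definition set_below :: "('i \<Rightarrow> 'a \<Rightarrow> 'a \<Rightarrow> bool) \<Rightarrow> 'i \<Rightarrow> 'a set \<Rightarrow> 'a \<Rightarrow> bool" where
  "set_below P \<alpha> X y \<longleftrightarrow> (\<forall>x\<in>X. P \<alpha> x y)"

definition preorders :: "('i \<Rightarrow> 'a \<Rightarrow> 'a \<Rightarrow> bool) \<Rightarrow> bool" where
  "preorders P \<longleftrightarrow> (\<forall>\<alpha>. (\<forall>x. P \<alpha> x x) \<and> (\<forall>x y z. P \<alpha> x y \<longrightarrow> P \<alpha> y z \<longrightarrow> P \<alpha> x z))"

definition ax1 :: "('i::order \<Rightarrow> 'a \<Rightarrow> 'a \<Rightarrow> bool) \<Rightarrow> bool" where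
  "ax1 P \<longleftrightarrow> (\<forall>\<alpha> \<beta> x y. \<alpha> < \<beta> \<longrightarrow> P \<beta> x y \<longrightarrow> eqa P \<alpha> x y)"

definition ax2 :: "('i \<Rightarrow> 'a \<Rightarrow> 'a \<Rightarrow> bool) \<Rightarrow> bool" where
  "ax2 P \<longleftrightarrow> (\<forall>x y. (\<forall>\<alpha>. eqa P \<alpha> x y) \<longleftrightarrow> x = y)"

definition ax3 :: "('i::order \<Rightarrow> 'a::complete_lattice \<Rightarrow> 'a \<Rightarrow> bool) \<Rightarrow> bool" where
  "ax3 P \<longleftrightarrow> (\<forall>x \<alpha> X. X \<subseteq> lcone P x \<alpha> \<longrightarrow>
     (\<exists>y\<in>lcone P x \<alpha>. set_below P \<alpha> X y \<and>
        (\<forall>z\<in>lcone P x \<alpha>. set_below P \<alpha> X z \<longrightarrow> P \<alpha> y z \<and> y \<le> z)))"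

definition ax4 :: "('i \<Rightarrow> 'a::complete_lattice \<Rightarrow> 'a \<Rightarrow> bool) \<Rightarrow> bool" where
  "ax4 P \<longleftrightarrow> (\<forall>X \<alpha> y. X \<noteq> {} \<longrightarrow> (\<forall>x\<in>X. eqa P \<alpha> y x) \<longrightarrow> eqa P \<alpha> y (Sup X))"

definition model :: "('i::order \<Rightarrow> 'a::complete_lattice \<Rightarrow> 'a \<Rightarrow> bool) \<Rightarrow> bool" where
  "model P \<longleftrightarrow> preorders P \<and> ax1 P \<and> ax2 P \<and> ax3 P \<and> ax4 P"

text \<open>The element of Axiom 3 (unique by antisymmetry of \<le>).\<close>
definition bsup :: "('i::order \<Rightarrow> 'a::complete_lattice \<Rightarrow> 'a \<Rightarrow> bool) \<Rightarrow> 'a \<Rightarrow> 'i \<Rightarrow> 'a set \<Rightarrow> 'a" where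
  "bsup P x \<alpha> X = (THE y. y \<in> lcone P x \<alpha> \<and> set_below P \<alpha> X y \<and>
        (\<forall>z\<in>lcone P x \<alpha>. set_below P \<alpha> X z \<longrightarrow> P \<alpha> y z \<and> y \<le> z))"

definition slice :: "('i::order \<Rightarrow> 'a::complete_lattice \<Rightarrow> 'a \<Rightarrow> bool) \<Rightarrow> 'a \<Rightarrow> 'i \<Rightarrow> 'a" where
  "slice P x \<alpha> = bsup P x \<alpha> {x}"

text \<open>kappa limit (and kappa > 0, automatic since types are nonempty): no largest index.\<close>
definition limit_index :: "'i::wellorder itself \<Rightarrow> bool" where
  "limit_index _ \<longleftrightarrow> (\<forall>\<alpha>::'i. \<exists>\<beta>. \<alpha> < \<beta>)"

definition osucc :: "'i::wellorder \<Rightarrow> 'i" where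
  "osucc \<alpha> = (LEAST \<beta>. \<alpha> < \<beta>)"

end

theory Submission
  imports Defs
begin

lemma bsup_prop:
  assumes m: "model P" and X: "X \<subseteq> lcone P x \<alpha>"
  shows "bsup P x \<alpha> X \<in> lcone P x \<alpha> \<and> set_below P \<alpha> X (bsup P x \<alpha> X) \<and>
        (\<forall>z\<in>lcone P x \<alpha>. set_below P \<alpha> X z \<longrightarrow> P \<alpha> (bsup P x \<alpha> X) z \<and> bsup P x \<alpha> X \<le> z)"
proof -
  from m X obtain y where y: "y\<in>lcone P x \<alpha> \<and> set_below P \<alpha> X y \<and>
        (\<forall>z\<in>lcone P x \<alpha>. set_below P \<alpha> X z \<longrightarrow> P \<alpha> y z \<and> y \<le> z)"
    unfolding model_def ax3_def by blast
  have "\<exists>!y. y\<in>lcone P x \<alpha> \<and> set_below P \<alpha> X y \<and>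
        (\<forall>z\<in>lcone P x \<alpha>. set_below P \<alpha> X z \<longrightarrow> P \<alpha> y z \<and> y \<le> z)"
    using y by (meson antisym)
  then show ?thesis unfolding bsup_def by (rule theI')
qed

theorem mainTheorem6:
  fixes P :: "'i::wellorder \<Rightarrow> 'a::complete_lattice \<Rightarrow> 'a \<Rightarrow> bool"
    and x :: 'a and \<alpha> :: 'i
  assumes "model P"
    and "limit_index TYPE('i)"
  shows "slice P x \<alpha> \<in> cls P x \<alpha>
    \<and> (\<forall>z\<in>cls P x \<alpha>. slice P x \<alpha> \<le> z)
    \<and> (\<forall>z\<in>cls P x \<alpha>. P (osucc \<alpha>) (slice P x \<alpha>) z)"
proof -
  have pre: "preorders P" and a1: "ax1 P" and a3: "ax3 P" using assms(1) by (auto simp: model_def)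
  have refl: "\<And>\<beta> u. P \<beta> u u" and tr: "\<And>\<beta> u v w. P \<beta> u v \<Longrightarrow> P \<beta> v w \<Longrightarrow> P \<beta> u w"
    using pre unfolding preorders_def by blast+
  have A1: "\<And>\<beta> \<gamma> u v. \<beta> < \<gamma> \<Longrightarrow> P \<gamma> u v \<Longrightarrow> eqa P \<beta> u v" using a1 unfolding ax1_def by blast
  define y where "y = slice P x \<alpha>"
  have xin: "x \<in> lcone P x \<alpha>" by (simp add: lcone_def eqa_def refl)
  have Y: "y \<in> lcone P x \<alpha> \<and> set_below P \<alpha> {x} y \<and>
        (\<forall>z\<in>lcone P x \<alpha>. set_below P \<alpha> {x} z \<longrightarrow> P \<alpha> y z \<and> y \<le> z)"
    unfolding y_def slice_def using bsup_prop[OF assms(1)] xin by blast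
  have c1: "y \<in> cls P x \<alpha>"
    using Y xin by (auto simp: cls_def eqa_def set_below_def refl)
  have inl: "z \<in> lcone P x \<alpha>" if "z \<in> cls P x \<alpha>" for z
    using that A1 by (auto simp: cls_def lcone_def eqa_def)
  have c2: "\<forall>z\<in>cls P x \<alpha>. y \<le> z"
    using Y inl by (auto simp: cls_def eqa_def set_below_def)
  define g where "g = osucc \<alpha>"
  have ag: "\<alpha> < g" unfolding g_def osucc_def
    using assms(2) unfolding limit_index_def by (meson LeastI)
  have lg: "\<beta> \<le> \<alpha>" if "\<beta> < g" for \<beta>
    using that unfolding g_def osucc_def by (meson not_le_imp_less not_less_Least)
  have c3: "P g y z" if z: "z \<in> cls P x \<alpha>" for z
  proof -
    have eqc: "lcone P z g = cls P x \<alpha>"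
    proof (intro set_eqI iffI)
      fix u assume "u \<in> lcone P z g"
      then have "eqa P \<alpha> z u" using ag by (auto simp: lcone_def)
      then show "u \<in> cls P x \<alpha>" using z tr by (auto simp: cls_def eqa_def)
    next
      fix u assume u: "u \<in> cls P x \<alpha>"
      then have zu: "eqa P \<alpha> z u" using z tr by (auto simp: cls_def eqa_def)
      show "u \<in> lcone P z g" unfolding lcone_def
      proof (intro CollectI allI impI)
        fix \<beta> assume "\<beta> < g"
        then have "\<beta> \<le> \<alpha>" by (rule lg)
        then show "eqa P \<beta> z u" using zu A1 by (metis eqa_def order.not_eq_order_implies_strict)
      qed
    qed
    from a3 obtain w where w: "w\<in>lcone P z g \<and> set_below P g {} w \<and>
        (\<forall>v\<in>lcone P z g. set_below P g {} v \<longrightarrow> P g w v \<and> w \<le> v)"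
      unfolding ax3_def by blast
    have "w \<le> y" using w c1 eqc by (auto simp: set_below_def)
    moreover have "y \<le> w" using w c2 eqc by auto
    ultimately have "w = y" by simp
    then show ?thesis using w eqc z by (auto simp: set_below_def)
  qed
  show ?thesis using c1 c2 c3 unfolding y_def g_def by blast
qed

end
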